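(* Let $m\ge2$, $n\ge2$ and $\mathcal{I}\subseteq\mathbb{R}^{m\times n}$ any set of instances of the goods allocation problem. An allocation function $A$ over $\mathcal{I}$ is proportionable (in the goods sense) if and only if for every $v\in\mathcal{I}$, $\sum_{i\in[m]}v_i(A(v)_i)\ge\frac1m\sum_{i\in[m]}v_i([n])$.
   Context: Goods allocation: $m$ agents $[m]$, $n$ goods $[n]$; an instance is a matrix $v$ with $v_{i,j}$ the value of agent $i$ for good $j$, and $v_i(S)=\sum_{j\in S}v_{i,j}$. An allocation is a tuple $(A_1,\dots,A_m)$ of pairwise disjoint subsets of $[n]$ with union $[n]$. A mechanism $(A,q)$ over $\mathcal{I}$ assigns to each $v$ an allocation $A(v)$ and transfers $q(v)\in\mathbb{R}^m$; agent $i$'s utility is $v_i(A_i)-q_i$. It is proportional if for every $v\in\mathcal{I}$ and $i\in[m]$: $v_i(A_i)-q_i\ge\frac1m\sum_{j\in[m]}(v_i(A_j)-q_j)$. An allocation function $A$ is proportionable if some transfer function $q$ makes $(A,q)$ proportional. *)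

theory Defs
  imports "HOL-Analysis.Analysis"
begin

text \<open>Agents are the elements of a finite type 'm (so m = CARD('m)), goods the elements
of a finite type 'n (n = CARD('n)). An instance is a matrix v :: real^'n^'m, with
v $ i $ j the value of agent i for good j.\<close>

definition bundle_val :: "real^'n::finite^'m::finite \<Rightarrow> 'm \<Rightarrow> 'n set \<Rightarrow> real" where
  "bundle_val v i S = (\<Sum>j\<in>S. v $ i $ j)"

definition is_allocation :: "('m::finite \<Rightarrow> 'n::finite set) \<Rightarrow> bool" where
  "is_allocation X \<longleftrightarrow> (\<forall>i k. i \<noteq> k \<longrightarrow> X i \<inter> X k = {}) \<and> (\<Union>i. X i) = UNIV"

definition allocation_function ::
  "(real^'n::finite^'m::finite) set \<Rightarrow> (real^'n^'m \<Rightarrow> 'm \<Rightarrow> 'n set) \<Rightarrow> bool" where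
  "allocation_function I A \<longleftrightarrow> (\<forall>v\<in>I. is_allocation (A v))"

definition proportional_mech ::
  "(real^'n::finite^'m::finite) set \<Rightarrow> (real^'n^'m \<Rightarrow> 'm \<Rightarrow> 'n set) \<Rightarrow> (real^'n^'m \<Rightarrow> 'm \<Rightarrow> real) \<Rightarrow> bool" where
  "proportional_mech I A q \<longleftrightarrow>
     (\<forall>v\<in>I. \<forall>i. bundle_val v i (A v i) - q v i
         \<ge> (1 / real CARD('m)) * (\<Sum>k\<in>UNIV. bundle_val v i (A v k) - q v k))"

definition proportionable ::
  "(real^'n::finite^'m::finite) set \<Rightarrow> (real^'n^'m \<Rightarrow> 'm \<Rightarrow> 'n set) \<Rightarrow> bool" where
  "proportionable I A \<longleftrightarrow> (\<exists>q. proportional_mech I A q)"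

end

theory Submission
  imports Defs
begin

lemma alloc_sum:
  fixes v :: "real^'n::finite^'m::finite" and X :: "'m \<Rightarrow> 'n set"
  assumes "is_allocation X"
  shows "(\<Sum>k\<in>UNIV. bundle_val v i (X k)) = bundle_val v i UNIV"
proof -
  have d: "\<forall>k\<in>UNIV. \<forall>l\<in>UNIV. k \<noteq> l \<longrightarrow> X k \<inter> X l = {}" and u: "(\<Union>k. X k) = UNIV"
    using assms unfolding is_allocation_def by auto
  have "bundle_val v i UNIV = sum (\<lambda>j. v $ i $ j) (\<Union>k. X k)"
    using u unfolding bundle_val_def by simp
  also have "\<dots> = (\<Sum>k\<in>UNIV. sum (\<lambda>j. v $ i $ j) (X k))"
    by (rule sum.UNION_disjoint) (use d in auto)
  finally show ?thesis unfolding bundle_val_def by simp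
qed

theorem mainTheorem7:
  fixes I :: "(real^'n::finite^'m::finite) set"
    and A :: "real^'n^'m \<Rightarrow> 'm \<Rightarrow> 'n set"
  assumes "CARD('m) \<ge> 2" and "CARD('n) \<ge> 2"
    and "allocation_function I A"
  shows "proportionable I A \<longleftrightarrow>
    (\<forall>v\<in>I. (\<Sum>i\<in>UNIV. bundle_val v i (A v i))
             \<ge> (1 / real CARD('m)) * (\<Sum>i\<in>UNIV. bundle_val v i UNIV))"
proof -
  define m where "m = real CARD('m)"
  have mpos: "m > 0" unfolding m_def by simp
  have AS: "\<And>v i. v \<in> I \<Longrightarrow> (\<Sum>k\<in>UNIV. bundle_val v i (A v k)) = bundle_val v i UNIV"
    using assms(3) alloc_sum unfolding allocation_function_def by blast
  show ?thesis
  proof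
    assume "proportionable I A"
    then obtain q where q: "proportional_mech I A q" unfolding proportionable_def by blast
    show "\<forall>v\<in>I. (\<Sum>i\<in>UNIV. bundle_val v i (A v i))
             \<ge> (1 / real CARD('m)) * (\<Sum>i\<in>UNIV. bundle_val v i UNIV)"
    proof
      fix v assume v: "v \<in> I"
      have h: "\<And>i. bundle_val v i (A v i) - q v i \<ge> (1/m) * (bundle_val v i UNIV - (\<Sum>k\<in>UNIV. q v k))"
      proof -
        fix i
        have "bundle_val v i (A v i) - q v i \<ge> (1/m) * (\<Sum>k\<in>UNIV. bundle_val v i (A v k) - q v k)"
          using q v unfolding proportional_mech_def m_def by blast
        thus "bundle_val v i (A v i) - q v i \<ge> (1/m) * (bundle_val v i UNIV - (\<Sum>k\<in>UNIV. q v k))"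
          using AS[OF v, of i] by (simp add: sum_subtractf)
      qed
      have "(\<Sum>i\<in>UNIV. bundle_val v i (A v i) - q v i) \<ge> (\<Sum>i\<in>UNIV. (1/m) * (bundle_val v i UNIV - (\<Sum>k\<in>UNIV. q v k)))"
        by (rule sum_mono) (rule h)
      hence "(\<Sum>i\<in>UNIV. bundle_val v i (A v i)) - (\<Sum>i\<in>UNIV. q v i) \<ge> (1/m) * (\<Sum>i\<in>UNIV. bundle_val v i UNIV) - (1/m) * m * (\<Sum>k\<in>UNIV. q v k)"
        by (simp add: sum_subtractf sum_distrib_left[symmetric] right_diff_distrib m_def sum_divide_distrib[symmetric])
      thus "(\<Sum>i\<in>UNIV. bundle_val v i (A v i)) \<ge> (1 / real CARD('m)) * (\<Sum>i\<in>UNIV. bundle_val v i UNIV)"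
        using mpos unfolding m_def by simp
    qed
  next
    assume H: "\<forall>v\<in>I. (\<Sum>i\<in>UNIV. bundle_val v i (A v i))
             \<ge> (1 / real CARD('m)) * (\<Sum>i\<in>UNIV. bundle_val v i UNIV)"
    define q where "q v i = bundle_val v i (A v i) - (1/m) * bundle_val v i UNIV" for v i
    have "proportional_mech I A q"
      unfolding proportional_mech_def
    proof (intro ballI allI)
      fix v i assume v: "v \<in> I"
      have Q: "(\<Sum>k\<in>UNIV. q v k) \<ge> 0"
        using H v unfolding q_def m_def by (simp add: sum_subtractf sum_distrib_left)
      have "(1 / real CARD('m)) * (\<Sum>k\<in>UNIV. bundle_val v i (A v k) - q v k)
          = (1/m) * bundle_val v i UNIV - (1/m) * (\<Sum>k\<in>UNIV. q v k)"
        using AS[OF v, of i] unfolding m_def by (simp add: sum_subtractf right_diff_distrib)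
      also have "\<dots> \<le> (1/m) * bundle_val v i UNIV"
        using Q mpos by simp
      also have "\<dots> = bundle_val v i (A v i) - q v i" unfolding q_def by simp
      finally show "bundle_val v i (A v i) - q v i \<ge> (1 / real CARD('m)) * (\<Sum>k\<in>UNIV. bundle_val v i (A v k) - q v k)" .
    qed
    thus "proportionable I A" unfolding proportionable_def by blast
  qed
qed

end
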